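(* Let $\eta_1,\dots,\eta_n$ be admissible measures on $\mathbb R$. For each $i$ let $M_i(dx):=\cosh(x)\,\eta_i(dx)$, let $X_i\sim M_i$ be independent, and $U_i:=\tanh(X_i)\in[-1,1]$. Define $\Psi(y_1,\dots,y_n):=\frac12\big(\prod_{i=1}^n(1+y_i)-\prod_{i=1}^n(1-y_i)\big)$. Then each $M_i$ is a probability measure, $\mathbb E U_i=0$ for every $i$, and \[ T(\eta_1*\cdots*\eta_n)=\mathbb E|\Psi(U_1,\dots,U_n)|. \] Moreover, if $\bar\eta:=\frac1n\sum_i\eta_i$, $\bar M(dx):=\cosh(x)\bar\eta(dx)=\frac1n\sum_iM_i(dx)$, $\bar X\sim\bar M$, $\bar U:=\tanh(\bar X)$, and $\bar U_1,\dots,\bar U_n$ are i.i.d. copies of $\bar U$, then $T(\bar\eta^{*n})=\mathbb E|\Psi(\bar U_1,\dots,\bar U_n)|$, and the law of $\bar U$ is the arithmetic average of the laws of $U_1,\dots,U_n$.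
   Context: A finitely supported positive measure $\eta$ on $\mathbb R$ is called admissible if $\int e^x\,\eta(dx)=\int e^{-x}\,\eta(dx)=1$. $T(\eta):=\frac12\int_{\mathbb R}|e^x-e^{-x}|\,\eta(dx)$. $*$ denotes convolution and $\eta^{*n}$ the $n$-fold self-convolution. *)

theory Defs
  imports "HOL-Probability.Probability"
begin

text \<open>A finitely supported positive measure on the reals is represented by its
  weight function \<open>\<eta> :: real \<Rightarrow> real\<close> (the mass of the point x), with finite support.\<close>

definition supp_m :: "(real \<Rightarrow> real) \<Rightarrow> real set" where
  "supp_m \<eta> = {x. \<eta> x \<noteq> 0}"

definition fin_pos_measure :: "(real \<Rightarrow> real) \<Rightarrow> bool" where
  "fin_pos_measure \<eta> \<longleftrightarrow> finite (supp_m \<eta>) \<and> (\<forall>x. 0 \<le> \<eta> x)"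

definition admissible :: "(real \<Rightarrow> real) \<Rightarrow> bool" where
  "admissible \<eta> \<longleftrightarrow> fin_pos_measure \<eta>
     \<and> (\<Sum>x\<in>supp_m \<eta>. exp x * \<eta> x) = 1
     \<and> (\<Sum>x\<in>supp_m \<eta>. exp (- x) * \<eta> x) = 1"

definition T :: "(real \<Rightarrow> real) \<Rightarrow> real" where
  "T \<eta> = (1/2) * (\<Sum>x\<in>supp_m \<eta>. \<bar>exp x - exp (- x)\<bar> * \<eta> x)"

definition conv :: "(real \<Rightarrow> real) \<Rightarrow> (real \<Rightarrow> real) \<Rightarrow> real \<Rightarrow> real" where
  "conv \<eta> \<nu> z = (\<Sum>x\<in>supp_m \<eta>. \<eta> x * \<nu> (z - x))"

definition dirac0 :: "real \<Rightarrow> real" where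
  "dirac0 x = (if x = 0 then 1 else 0)"

fun convs :: "(nat \<Rightarrow> real \<Rightarrow> real) \<Rightarrow> nat \<Rightarrow> real \<Rightarrow> real" where
  "convs \<eta> 0 = dirac0"
| "convs \<eta> (Suc n) = conv (convs \<eta> n) (\<eta> n)"

definition Psi :: "nat \<Rightarrow> (nat \<Rightarrow> real) \<Rightarrow> real" where
  "Psi n y = (1/2) * ((\<Prod>i<n. 1 + y i) - (\<Prod>i<n. 1 - y i))"

definition cmeas :: "(real \<Rightarrow> real) \<Rightarrow> real measure" where
  "cmeas \<eta> = density (count_space UNIV) (\<lambda>x. ennreal (cosh x * \<eta> x))"

end

theory Submission
  imports Defs
begin

lemma sum_supp_superset:
  assumes "finite F" "supp_m f \<subseteq> F"
  shows "(\<Sum>x\<in>supp_m f. g x * f x) = (\<Sum>x\<in>F. g x * f x)"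
  by (rule sum.mono_neutral_left) (use assms in \<open>auto simp: supp_m_def\<close>)

lemma supp_conv:
  "supp_m (conv a b) \<subseteq> (\<lambda>(y,w). y+w) ` (supp_m a \<times> supp_m b)"
proof
  fix z assume "z \<in> supp_m (conv a b)"
  hence "(\<Sum>x\<in>supp_m a. a x * b (z - x)) \<noteq> 0" by (simp add: supp_m_def conv_def)
  then obtain y where y: "y \<in> supp_m a" "a y * b (z - y) \<noteq> 0"
    by (meson sum.neutral)
  hence "(y, z - y) \<in> supp_m a \<times> supp_m b" by (auto simp: supp_m_def)
  moreover have "z = (\<lambda>(y,w). y+w) (y, z-y)" by simp
  ultimately show "z \<in> (\<lambda>(y,w). y+w) ` (supp_m a \<times> supp_m b)" by blast
qed

lemma finite_supp_conv:
  "finite (supp_m a) \<Longrightarrow> finite (supp_m b) \<Longrightarrow> finite (supp_m (conv a b))"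
  by (rule finite_subset[OF supp_conv]) auto

lemma finite_supp_convs:
  "(\<forall>i<n. finite (supp_m (\<eta> i))) \<Longrightarrow> finite (supp_m (convs \<eta> n))"
proof (induction n)
  case 0
  have "supp_m dirac0 = {0}" by (auto simp: supp_m_def dirac0_def)
  then show ?case by simp
next
  case (Suc n)
  then show ?case by (simp add: finite_supp_conv)
qed

lemma conv_sum:
  assumes fa: "finite (supp_m a)" and fb: "finite (supp_m b)"
  shows "(\<Sum>z\<in>supp_m (conv a b). h z * conv a b z)
       = (\<Sum>y\<in>supp_m a. a y * (\<Sum>w\<in>supp_m b. h (y+w) * b w))"
proof -
  define F where "F = (\<lambda>(y,w). y+w) ` (supp_m a \<times> supp_m b)"
  have fF: "finite F" using fa fb by (simp add: F_def)
  have "(\<Sum>z\<in>supp_m (conv a b). h z * conv a b z) = (\<Sum>z\<in>F. h z * conv a b z)"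
    using fF supp_conv[of a b] by (intro sum_supp_superset) (auto simp: F_def)
  also have "\<dots> = (\<Sum>z\<in>F. \<Sum>y\<in>supp_m a. a y * (h z * b (z - y)))"
    by (simp add: conv_def sum_distrib_left mult_ac)
  also have "\<dots> = (\<Sum>y\<in>supp_m a. \<Sum>z\<in>F. a y * (h z * b (z - y)))"
    by (rule sum.swap)
  also have "\<dots> = (\<Sum>y\<in>supp_m a. a y * (\<Sum>w\<in>supp_m b. h (y+w) * b w))"
  proof (rule sum.cong[OF refl])
    fix y assume y: "y \<in> supp_m a"
    have "(\<Sum>z\<in>F. h z * b (z - y)) = (\<Sum>z\<in>(\<lambda>w. y+w) ` supp_m b. h z * b (z - y))"
    proof (rule sum.mono_neutral_right)
      show "finite F" by fact
      show "(+) y ` supp_m b \<subseteq> F" using y by (auto simp: F_def)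
      show "\<forall>z\<in>F - (+) y ` supp_m b. h z * b (z - y) = 0"
      proof
        fix z assume "z \<in> F - (+) y ` supp_m b"
        hence nz: "z \<notin> (+) y ` supp_m b" by blast
        have "z - y \<notin> supp_m b"
        proof
          assume "z - y \<in> supp_m b"
          then have "y + (z - y) \<in> (+) y ` supp_m b" by blast
          then show False using nz by simp
        qed
        thus "h z * b (z - y) = 0" by (simp add: supp_m_def)
      qed
    qed
    also have "\<dots> = (\<Sum>w\<in>supp_m b. h (y+w) * b w)"
      by (subst sum.reindex) (auto simp: inj_on_def)
    finally show "(\<Sum>z\<in>F. a y * (h z * b (z - y))) = a y * (\<Sum>w\<in>supp_m b. h (y+w) * b w)"
      by (simp add: sum_distrib_left[symmetric])
  qed
  finally show ?thesis .
qed

lemma convs_sum: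
  assumes "\<forall>i<n. finite (supp_m (\<eta> i))"
  shows "(\<Sum>z\<in>supp_m (convs \<eta> n). h z * convs \<eta> n z)
     = (\<Sum>x\<in>PiE {..<n} (\<lambda>i. supp_m (\<eta> i)). h (\<Sum>i<n. x i) * (\<Prod>i<n. \<eta> i (x i)))"
  using assms
proof (induction n arbitrary: h)
  case 0
  have "supp_m dirac0 = {0}" by (auto simp: supp_m_def dirac0_def)
  then have "(\<Sum>z\<in>supp_m (convs \<eta> 0). h z * convs \<eta> 0 z) = h 0 * dirac0 0"
    by (simp only: convs.simps sum.insert_if) simp
  moreover have "dirac0 0 = 1" by (simp add: dirac0_def)
  ultimately show ?case by simp
next
  case (Suc n)
  let ?S = "\<lambda>i. supp_m (\<eta> i)"
  define H where "H y = (\<Sum>w\<in>?S n. h (y+w) * \<eta> n w)" for y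
  have fin: "\<forall>i<n. finite (?S i)" using Suc.prems by auto
  have "(\<Sum>z\<in>supp_m (convs \<eta> (Suc n)). h z * convs \<eta> (Suc n) z)
      = (\<Sum>y\<in>supp_m (convs \<eta> n). convs \<eta> n y * H y)"
    using conv_sum[OF finite_supp_convs[OF fin], of "\<eta> n" h] Suc.prems
    by (simp add: H_def)
  also have "\<dots> = (\<Sum>y\<in>supp_m (convs \<eta> n). H y * convs \<eta> n y)"
    by (simp add: mult_ac)
  also have "\<dots> = (\<Sum>x\<in>PiE {..<n} ?S. H (\<Sum>i<n. x i) * (\<Prod>i<n. \<eta> i (x i)))"
    using Suc.IH[OF fin] .
  also have "\<dots> = (\<Sum>x\<in>PiE {..<n} ?S. \<Sum>w\<in>?S n. h ((\<Sum>i<n. x i) + w) * (\<eta> n w * (\<Prod>i<n. \<eta> i (x i))))"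
    by (simp add: H_def sum_distrib_left sum_distrib_right mult_ac)
  also have "\<dots> = (\<Sum>(w,x)\<in>?S n \<times> PiE {..<n} ?S. h ((\<Sum>i<n. x i) + w) * (\<eta> n w * (\<Prod>i<n. \<eta> i (x i))))"
    by (subst sum.swap) (simp add: sum.cartesian_product)
  also have "\<dots> = (\<Sum>g\<in>PiE {..<Suc n} ?S. h (\<Sum>i<Suc n. g i) * (\<Prod>i<Suc n. \<eta> i (g i)))"
  proof (rule sum.reindex_bij_witness[of _ "\<lambda>g. (g n, g(n := undefined))" "\<lambda>(w,x). x(n := w)"])
    fix a assume "a \<in> ?S n \<times> PiE {..<n} ?S"
    then obtain w x where a: "a = (w, x)" by (cases a) auto
    have e1: "(\<Sum>i<n. (x(n := w)) i) = (\<Sum>i<n. x i)" by (intro sum.cong) auto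
    have e2: "(\<Prod>i<n. \<eta> i ((x(n := w)) i)) = (\<Prod>i<n. \<eta> i (x i))" by (intro prod.cong) auto
    show "h (\<Sum>i<Suc n. (case a of (w, x) \<Rightarrow> x(n := w)) i) * (\<Prod>i<Suc n. \<eta> i ((case a of (w, x) \<Rightarrow> x(n := w)) i))
        = (case a of (w, x) \<Rightarrow> h ((\<Sum>i<n. x i) + w) * (\<eta> n w * (\<Prod>i<n. \<eta> i (x i))))"
      by (simp add: a e1 e2 mult_ac add_ac)
  qed (auto simp: PiE_def extensional_def Pi_def)
  finally show ?case .
qed


definition cpmf :: "(real \<Rightarrow> real) \<Rightarrow> real pmf" where
  "cpmf \<eta> = embed_pmf (\<lambda>x. cosh x * \<eta> x)"

lemma adm_nonneg: "admissible \<eta> \<Longrightarrow> 0 \<le> \<eta> x"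
  by (simp add: admissible_def fin_pos_measure_def)

lemma adm_finite: "admissible \<eta> \<Longrightarrow> finite (supp_m \<eta>)"
  by (simp add: admissible_def fin_pos_measure_def)

lemma cosh_real_eq: "cosh (x::real) = (exp x + exp (-x)) / 2"
  by (simp add: cosh_def)

lemma sinh_real_eq: "sinh (x::real) = (exp x - exp (-x)) / 2"
  by (simp add: sinh_def)

lemma adm_sum_cosh:
  assumes "admissible \<eta>"
  shows "(\<Sum>x\<in>supp_m \<eta>. cosh x * \<eta> x) = 1"
proof -
  have "(\<Sum>x\<in>supp_m \<eta>. cosh x * \<eta> x)
      = ((\<Sum>x\<in>supp_m \<eta>. exp x * \<eta> x) + (\<Sum>x\<in>supp_m \<eta>. exp (- x) * \<eta> x)) / 2"
    by (simp add: cosh_real_eq sum_divide_distrib[symmetric] sum.distrib[symmetric] algebra_simps)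
  then show ?thesis using assms by (simp add: admissible_def)
qed

lemma adm_sum_sinh:
  assumes "admissible \<eta>"
  shows "(\<Sum>x\<in>supp_m \<eta>. sinh x * \<eta> x) = 0"
proof -
  have "(\<Sum>x\<in>supp_m \<eta>. sinh x * \<eta> x)
      = ((\<Sum>x\<in>supp_m \<eta>. exp x * \<eta> x) - (\<Sum>x\<in>supp_m \<eta>. exp (- x) * \<eta> x)) / 2"
    by (simp add: sinh_real_eq sum_divide_distrib[symmetric] sum_subtractf[symmetric] algebra_simps)
  then show ?thesis using assms by (simp add: admissible_def)
qed

lemma adm_nn:
  assumes "admissible \<eta>"
  shows "(\<integral>\<^sup>+x. ennreal (cosh x * \<eta> x) \<partial>count_space UNIV) = 1"
proof -
  have "(\<integral>\<^sup>+x. ennreal (cosh x * \<eta> x) \<partial>count_space UNIV) = (\<Sum>x\<in>supp_m \<eta>. ennreal (cosh x * \<eta> x))"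
    using adm_finite[OF assms] by (intro nn_integral_count_space') (auto simp: supp_m_def)
  also have "\<dots> = ennreal (\<Sum>x\<in>supp_m \<eta>. cosh x * \<eta> x)"
    using assms by (intro sum_ennreal) (simp add: adm_nonneg)
  finally show ?thesis using adm_sum_cosh[OF assms] by simp
qed

lemma pmf_cpmf: "admissible \<eta> \<Longrightarrow> pmf (cpmf \<eta>) x = cosh x * \<eta> x"
  unfolding cpmf_def by (rule pmf_embed_pmf) (auto simp: adm_nonneg adm_nn)

lemma cmeas_eq: "admissible \<eta> \<Longrightarrow> cmeas \<eta> = measure_pmf (cpmf \<eta>)"
  unfolding cmeas_def measure_pmf_eq_density by (simp add: pmf_cpmf)

lemma set_cpmf: "admissible \<eta> \<Longrightarrow> set_pmf (cpmf \<eta>) = supp_m \<eta>"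
  by (auto simp: set_pmf_iff pmf_cpmf supp_m_def)

lemma integral_cmeas:
  fixes f :: "real \<Rightarrow> real"
  assumes "admissible \<eta>" "finite F" "supp_m \<eta> \<subseteq> F"
  shows "(\<integral>x. f x \<partial>cmeas \<eta>) = (\<Sum>x\<in>F. cosh x * \<eta> x * f x)"
  unfolding cmeas_eq[OF assms(1)]
  by (subst integral_measure_pmf[OF assms(2)]) (use assms in \<open>auto simp: set_cpmf pmf_cpmf\<close>)

lemma measure_cmeas:
  assumes "admissible \<eta>" "finite F" "supp_m \<eta> \<subseteq> F"
  shows "measure (cmeas \<eta>) B = (\<Sum>x\<in>B \<inter> F. cosh x * \<eta> x)"
proof -
  let ?p = "cpmf \<eta>"
  have "measure (measure_pmf ?p) B = measure (measure_pmf ?p) (B \<inter> set_pmf ?p)"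
    by (simp add: measure_Int_set_pmf)
  also have "B \<inter> set_pmf ?p = (B \<inter> F) \<inter> set_pmf ?p"
    using assms by (auto simp: set_cpmf)
  also have "measure (measure_pmf ?p) \<dots> = measure (measure_pmf ?p) (B \<inter> F)"
    by (simp add: measure_Int_set_pmf)
  also have "\<dots> = (\<Sum>x\<in>B \<inter> F. cosh x * \<eta> x)"
    using assms by (simp add: measure_measure_pmf_finite pmf_cpmf)
  finally show ?thesis using cmeas_eq[OF assms(1)] by simp
qed

lemma prob_cmeas: "admissible \<eta> \<Longrightarrow> prob_space (cmeas \<eta>)"
  by (simp add: cmeas_eq measure_pmf.prob_space_axioms)

lemma tanh_cmeas:
  assumes "admissible \<eta>" shows "(\<integral>x. tanh x \<partial>cmeas \<eta>) = 0"
proof -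
  have "(\<integral>x. tanh x \<partial>cmeas \<eta>) = (\<Sum>x\<in>supp_m \<eta>. cosh x * \<eta> x * tanh x)"
    using assms by (intro integral_cmeas) (auto simp: adm_finite)
  also have "\<dots> = (\<Sum>x\<in>supp_m \<eta>. sinh x * \<eta> x)"
    by (intro sum.cong) (auto simp: tanh_def)
  finally show ?thesis using adm_sum_sinh[OF assms] by simp
qed

lemma PiM_pmf:
  assumes fin: "finite I"
  shows "PiM I (\<lambda>i. measure_pmf (p i))
       = distr (measure_pmf (Pi_pmf I undefined p)) (PiM I (\<lambda>i. measure_pmf (p i))) (\<lambda>x. restrict x I)"
proof -
  interpret product_prob_space "\<lambda>i. measure_pmf (p i)"
    by (intro product_prob_spaceI) (simp add: measure_pmf.prob_space_axioms)
  show ?thesis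
  proof (rule sym, rule PiM_eqI)
    show "finite I" by fact
    show "sets (distr (measure_pmf (Pi_pmf I undefined p)) (PiM I (\<lambda>i. measure_pmf (p i))) (\<lambda>x. restrict x I))
        = sets (PiM I (\<lambda>i. measure_pmf (p i)))" by simp
  next
    fix A
    have "Pi\<^sub>E I A \<in> sets (Pi\<^sub>M I (\<lambda>i. measure_pmf (p i)))"
      by (intro sets_PiM_I_finite fin) auto
    hence "emeasure (distr (measure_pmf (Pi_pmf I undefined p)) (PiM I (\<lambda>i. measure_pmf (p i))) (\<lambda>x. restrict x I)) (Pi\<^sub>E I A) =
           emeasure (measure_pmf (Pi_pmf I undefined p)) ((\<lambda>x. restrict x I) -` Pi\<^sub>E I A)"
      by (subst emeasure_distr) (auto simp: space_PiM)
    also have "\<dots> = emeasure (measure_pmf (Pi_pmf I undefined p)) (PiE_dflt I undefined A)"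
      by (intro emeasure_eq_AE AE_pmfI) (auto simp: PiE_dflt_def set_Pi_pmf fin)
    also have "\<dots> = (\<Prod>i\<in>I. emeasure (measure_pmf (p i)) (A i))"
      by (simp add: measure_pmf.emeasure_eq_measure measure_Pi_pmf_PiE_dflt fin prod_ennreal)
    finally show "emeasure (distr (measure_pmf (Pi_pmf I undefined p)) (PiM I (\<lambda>i. measure_pmf (p i))) (\<lambda>x. restrict x I)) (Pi\<^sub>E I A)
       = (\<Prod>i\<in>I. emeasure (measure_pmf (p i)) (A i))" .
  qed
qed


lemma psi_ident:
  "(\<Prod>i<n. cosh (x i)) * Psi n (\<lambda>i. tanh (x i))
     = (exp (\<Sum>i<n. x i) - exp (- (\<Sum>i<n. x i))) / 2"
proof -
  have a: "cosh t * (1 + tanh t) = exp t" for t :: real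
    by (simp add: tanh_def field_simps cosh_plus_sinh)
  have b: "cosh t * (1 - tanh t) = exp (- t)" for t :: real
    by (simp add: tanh_def field_simps cosh_minus_sinh)
  have "(\<Prod>i<n. cosh (x i)) * Psi n (\<lambda>i. tanh (x i))
      = ((\<Prod>i<n. cosh (x i)) * (\<Prod>i<n. 1 + tanh (x i)) - (\<Prod>i<n. cosh (x i)) * (\<Prod>i<n. 1 - tanh (x i))) / 2"
    by (simp add: Psi_def right_diff_distrib)
  also have "\<dots> = ((\<Prod>i<n. cosh (x i) * (1 + tanh (x i))) - (\<Prod>i<n. cosh (x i) * (1 - tanh (x i)))) / 2"
    by (simp only: prod.distrib)
  also have "\<dots> = ((\<Prod>i<n. exp (x i)) - (\<Prod>i<n. exp (- x i))) / 2"
    by (simp add: a b)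
  also have "\<dots> = (exp (\<Sum>i<n. x i) - exp (- (\<Sum>i<n. x i))) / 2"
    by (simp add: exp_sum sum_negf[symmetric])
  finally show ?thesis .
qed

lemma main_T:
  assumes adm: "\<forall>i<n. admissible (\<eta> i)"
  shows "T (convs \<eta> n) = (\<integral>x. \<bar>Psi n (\<lambda>i. tanh (x i))\<bar> \<partial>(PiM {..<n} (\<lambda>i. cmeas (\<eta> i))))"
proof -
  let ?S = "\<lambda>i. supp_m (\<eta> i)"
  let ?p = "\<lambda>i. cpmf (\<eta> i)"
  let ?P = "Pi_pmf {..<n} undefined ?p"
  let ?N = "PiM {..<n} (\<lambda>i. measure_pmf (?p i))"
  define g where "g x = \<bar>Psi n (\<lambda>i. tanh (x i))\<bar>" for x :: "nat \<Rightarrow> real"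
  have fin: "\<forall>i<n. finite (?S i)" using adm by (auto simp: adm_finite)
  have "PiM {..<n} (\<lambda>i. cmeas (\<eta> i)) = ?N"
    by (rule PiM_cong) (auto simp: adm cmeas_eq)
  also have "\<dots> = distr (measure_pmf ?P) ?N (\<lambda>x. restrict x {..<n})"
    by (rule PiM_pmf) simp
  finally have eqN: "PiM {..<n} (\<lambda>i. cmeas (\<eta> i)) = distr (measure_pmf ?P) ?N (\<lambda>x. restrict x {..<n})" .
  have gm: "g \<in> borel_measurable ?N"
  proof -
    have comp: "(\<lambda>x. tanh (x i)) \<in> borel_measurable ?N" if "i \<in> {..<n}" for i
      by (rule measurable_compose[OF measurable_component_singleton]) (use that in auto)
    show ?thesis unfolding g_def Psi_def
      by (intro borel_measurable_abs borel_measurable_times borel_measurable_diff borel_measurable_prod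
          borel_measurable_add borel_measurable_const comp)
  qed
  have "(\<integral>x. g x \<partial>(PiM {..<n} (\<lambda>i. cmeas (\<eta> i)))) = (\<integral>x. g (restrict x {..<n}) \<partial>measure_pmf ?P)"
    unfolding eqN by (rule integral_distr) (auto simp: gm space_PiM)
  also have "\<dots> = (\<integral>x. g x \<partial>measure_pmf ?P)"
    by (intro Bochner_Integration.integral_cong refl) (simp add: g_def Psi_def)
  also have "\<dots> = (\<Sum>x\<in>PiE {..<n} ?S. pmf ?P x *\<^sub>R g x)"
  proof (rule integral_measure_pmf)
    show "finite (PiE {..<n} ?S)" using fin by (intro finite_PiE) auto
    fix a assume "a \<in> set_pmf ?P"
    then show "a \<in> PiE {..<n} ?S"
      using adm by (auto simp: set_Pi_pmf PiE_dflt_def set_cpmf PiE_def extensional_def)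
  qed
  also have "\<dots> = (\<Sum>x\<in>PiE {..<n} ?S. (\<bar>exp (\<Sum>i<n. x i) - exp (- (\<Sum>i<n. x i))\<bar> / 2) * (\<Prod>i<n. \<eta> i (x i)))"
  proof (rule sum.cong[OF refl])
    fix x assume x: "x \<in> PiE {..<n} ?S"
    have "pmf ?P x = (\<Prod>i<n. cosh (x i) * \<eta> i (x i))"
      using x adm by (subst pmf_Pi') (auto simp: pmf_cpmf PiE_def extensional_def)
    also have "\<dots> = (\<Prod>i<n. cosh (x i)) * (\<Prod>i<n. \<eta> i (x i))"
      by (simp add: prod.distrib)
    finally have px: "pmf ?P x = \<dots>" .
    have cpos: "(\<Prod>i<n. cosh (x i)) > 0" by (intro prod_pos) auto
    have epos: "(\<Prod>i<n. \<eta> i (x i)) \<ge> 0" using adm by (intro prod_nonneg) (auto simp: adm_nonneg)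
    have "pmf ?P x *\<^sub>R g x = \<bar>(\<Prod>i<n. cosh (x i)) * Psi n (\<lambda>i. tanh (x i))\<bar> * (\<Prod>i<n. \<eta> i (x i))"
      using cpos epos by (simp add: px g_def abs_mult)
    also have "\<dots> = (\<bar>exp (\<Sum>i<n. x i) - exp (- (\<Sum>i<n. x i))\<bar> / 2) * (\<Prod>i<n. \<eta> i (x i))"
      by (simp add: psi_ident)
    finally show "pmf ?P x *\<^sub>R g x = (\<bar>exp (\<Sum>i<n. x i) - exp (- (\<Sum>i<n. x i))\<bar> / 2) * (\<Prod>i<n. \<eta> i (x i))" .
  qed
  also have "\<dots> = (\<Sum>z\<in>supp_m (convs \<eta> n). (\<bar>exp z - exp (- z)\<bar> / 2) * convs \<eta> n z)"
    by (rule convs_sum[OF fin, symmetric])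
  also have "\<dots> = T (convs \<eta> n)"
    by (simp add: T_def sum_distrib_left)
  finally show ?thesis by (simp add: g_def)
qed


lemma avg_sum:
  assumes fin: "\<forall>i<n. finite (supp_m (\<eta> i))"
  defines "F \<equiv> (\<Union>i<n. supp_m (\<eta> i))"
  shows "(\<Sum>x\<in>supp_m (\<lambda>x. (\<Sum>i<n. \<eta> i x) / real n). f x * ((\<Sum>i<n. \<eta> i x) / real n))
       = (\<Sum>i<n. \<Sum>x\<in>supp_m (\<eta> i). f x * \<eta> i x) / real n"
proof -
  have fF: "finite F" using fin by (auto simp: F_def)
  have sub: "supp_m (\<lambda>x. (\<Sum>i<n. \<eta> i x) / real n) \<subseteq> F"
  proof
    fix x assume "x \<in> supp_m (\<lambda>x. (\<Sum>i<n. \<eta> i x) / real n)"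
    then have "(\<Sum>i<n. \<eta> i x) \<noteq> 0" by (simp add: supp_m_def)
    then obtain i where "i < n" "\<eta> i x \<noteq> 0" by (meson lessThan_iff sum.neutral)
    then show "x \<in> F" by (auto simp: F_def supp_m_def)
  qed
  have "(\<Sum>x\<in>supp_m (\<lambda>x. (\<Sum>i<n. \<eta> i x) / real n). f x * ((\<Sum>i<n. \<eta> i x) / real n))
      = (\<Sum>x\<in>F. f x * ((\<Sum>i<n. \<eta> i x) / real n))"
    by (rule sum_supp_superset[OF fF sub])
  also have "\<dots> = (\<Sum>i<n. \<Sum>x\<in>F. f x * \<eta> i x) / real n"
    by (simp add: sum_divide_distrib[symmetric] sum_distrib_left sum.swap[of _ F])
  also have "\<dots> = (\<Sum>i<n. \<Sum>x\<in>supp_m (\<eta> i). f x * \<eta> i x) / real n"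
    by (intro arg_cong2[where f="(/)"] sum.cong refl sum_supp_superset[symmetric] fF)
       (auto simp: F_def)
  finally show ?thesis .
qed

lemma avg_adm:
  assumes "n \<ge> 1" "\<forall>i<n. admissible (\<eta> i)"
  shows "admissible (\<lambda>x. (\<Sum>i<n. \<eta> i x) / real n)"
proof -
  have fin: "\<forall>i<n. finite (supp_m (\<eta> i))" using assms by (auto simp: adm_finite)
  have "supp_m (\<lambda>x. (\<Sum>i<n. \<eta> i x) / real n) \<subseteq> (\<Union>i<n. supp_m (\<eta> i))"
  proof
    fix x assume "x \<in> supp_m (\<lambda>x. (\<Sum>i<n. \<eta> i x) / real n)"
    then have "(\<Sum>i<n. \<eta> i x) \<noteq> 0" by (simp add: supp_m_def)
    then obtain i where "i < n" "\<eta> i x \<noteq> 0" by (meson lessThan_iff sum.neutral)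
    then show "x \<in> (\<Union>i<n. supp_m (\<eta> i))" by (auto simp: supp_m_def)
  qed
  then have f1: "finite (supp_m (\<lambda>x. (\<Sum>i<n. \<eta> i x) / real n))"
    by (rule finite_subset) (use fin in auto)
  have nn: "\<forall>x. 0 \<le> (\<Sum>i<n. \<eta> i x) / real n"
    using assms by (auto intro!: divide_nonneg_nonneg sum_nonneg simp: adm_nonneg)
  have e1: "(\<Sum>x\<in>supp_m (\<lambda>x. (\<Sum>i<n. \<eta> i x) / real n). exp x * ((\<Sum>i<n. \<eta> i x) / real n)) = 1"
    using avg_sum[OF fin, of exp] assms by (simp add: admissible_def)
  have e2: "(\<Sum>x\<in>supp_m (\<lambda>x. (\<Sum>i<n. \<eta> i x) / real n). exp (- x) * ((\<Sum>i<n. \<eta> i x) / real n)) = 1"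
    using avg_sum[OF fin, of "\<lambda>x. exp (- x)"] assms by (simp add: admissible_def)
  show ?thesis using f1 nn e1 e2 by (simp add: admissible_def fin_pos_measure_def)
qed

theorem lemma1:
  fixes \<eta> :: "nat \<Rightarrow> real \<Rightarrow> real" and n :: nat
  assumes "n \<ge> 1"
    and "\<forall>i<n. admissible (\<eta> i)"
  defines "M \<equiv> (\<lambda>i. cmeas (\<eta> i))"
    and "\<eta>bar \<equiv> (\<lambda>x. (\<Sum>i<n. \<eta> i x) / real n)"
    and "Mbar \<equiv> cmeas (\<lambda>x. (\<Sum>i<n. \<eta> i x) / real n)"
  shows "(\<forall>i<n. prob_space (M i))
    \<and> (\<forall>i<n. (\<integral>x. tanh x \<partial>(M i)) = 0)
    \<and> T (convs \<eta> n) = (\<integral>x. \<bar>Psi n (\<lambda>i. tanh (x i))\<bar> \<partial>(PiM {..<n} M))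
    \<and> T (convs (\<lambda>_. \<eta>bar) n) = (\<integral>x. \<bar>Psi n (\<lambda>i. tanh (x i))\<bar> \<partial>(PiM {..<n} (\<lambda>_. Mbar)))
    \<and> (\<forall>A\<in>sets borel. measure (distr Mbar borel tanh) A
          = (\<Sum>i<n. measure (distr (M i) borel tanh) A) / real n)"
proof (intro conjI)
  note adm = assms(2)
  have admb: "admissible \<eta>bar" unfolding \<eta>bar_def by (rule avg_adm[OF assms(1,2)])
  have Mbar_eq: "Mbar = cmeas \<eta>bar" by (simp add: Mbar_def \<eta>bar_def)
  show "\<forall>i<n. prob_space (M i)" using adm by (simp add: M_def prob_cmeas)
  show "\<forall>i<n. (\<integral>x. tanh x \<partial>(M i)) = 0" using adm by (simp add: M_def tanh_cmeas)
  show "T (convs \<eta> n) = (\<integral>x. \<bar>Psi n (\<lambda>i. tanh (x i))\<bar> \<partial>(PiM {..<n} M))"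
    unfolding M_def by (rule main_T[OF adm])
  show "T (convs (\<lambda>_. \<eta>bar) n) = (\<integral>x. \<bar>Psi n (\<lambda>i. tanh (x i))\<bar> \<partial>(PiM {..<n} (\<lambda>_. Mbar)))"
    unfolding Mbar_eq using main_T[of n "\<lambda>_. \<eta>bar"] admb by simp
  show "\<forall>A\<in>sets borel. measure (distr Mbar borel tanh) A
          = (\<Sum>i<n. measure (distr (M i) borel tanh) A) / real n"
  proof
    fix A :: "real set" assume A: "A \<in> sets borel"
    define F where "F = (\<Union>i<n. supp_m (\<eta> i))"
    have fin: "\<forall>i<n. finite (supp_m (\<eta> i))" using adm by (auto simp: adm_finite)
    have fF: "finite F" using fin by (auto simp: F_def)
    have subb: "supp_m \<eta>bar \<subseteq> F"
    proof
      fix x assume "x \<in> supp_m \<eta>bar"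
      then have "(\<Sum>i<n. \<eta> i x) \<noteq> 0" by (simp add: supp_m_def \<eta>bar_def)
      then obtain i where "i < n" "\<eta> i x \<noteq> 0" by (meson lessThan_iff sum.neutral)
      then show "x \<in> F" by (auto simp: F_def supp_m_def)
    qed
    have md: "measure (distr (cmeas \<theta>) borel tanh) A = measure (cmeas \<theta>) (tanh -` A)"
      if "admissible \<theta>" for \<theta>
      using A that by (simp add: cmeas_eq measure_distr)
    have "measure (distr Mbar borel tanh) A = measure (cmeas \<eta>bar) (tanh -` A)"
      using md[OF admb] by (simp add: Mbar_eq)
    also have "\<dots> = (\<Sum>x\<in>tanh -` A \<inter> F. cosh x * \<eta>bar x)"
      by (rule measure_cmeas[OF admb fF subb])
    also have "\<dots> = (\<Sum>i<n. \<Sum>x\<in>tanh -` A \<inter> F. cosh x * \<eta> i x) / real n"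
      by (simp add: \<eta>bar_def sum_divide_distrib[symmetric] sum_distrib_left sum.swap[of _ "tanh -` A \<inter> F"])
    also have "\<dots> = (\<Sum>i<n. measure (distr (M i) borel tanh) A) / real n"
    proof (intro arg_cong2[where f="(/)"] sum.cong refl)
      fix i assume i: "i \<in> {..<n}"
      have "measure (distr (M i) borel tanh) A = measure (cmeas (\<eta> i)) (tanh -` A)"
        using md adm i by (simp add: M_def)
      also have "\<dots> = (\<Sum>x\<in>tanh -` A \<inter> F. cosh x * \<eta> i x)"
        using adm i fF by (intro measure_cmeas) (auto simp: F_def)
      finally show "(\<Sum>x\<in>tanh -` A \<inter> F. cosh x * \<eta> i x) = measure (distr (M i) borel tanh) A" by simp
    qed
    finally show "measure (distr Mbar borel tanh) A = (\<Sum>i<n. measure (distr (M i) borel tanh) A) / real n" .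
  qed
qed

end
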